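(* Let $0<q<p$ with $p+q=1$, and let $\mathcal D$ be the set of Dyck words over $\{S,H\}$ (S an up-step, H a down-step: equally many S and H, every prefix with at least as many S as H), including the empty word, endowed with the probability measure $\bar{\mathbb P}[w]=p(pq)^{|w|}$, where $|w|$ is half the length of $w$. For every integer $n\ge1$, the $\bar{\mathbb P}$-probability that a Dyck word ends with the subsequence $SH\cdots H$ with exactly $n$ letters H at the end is $pq^n$.
   Context: $\bar{\mathbb P}$ is a probability measure on $\mathcal D$: $\bar{\mathbb P}[w]$ is the probability that a random walk from $0$, with up-step probability $q$ and down-step probability $p$, follows the path $w$ and then steps to $-1$. *)

theory Defs
  imports "HOL-Analysis.Analysis"
begin

datatype letter = S | H

definition nS :: "letter list \<Rightarrow> nat" where
  "nS w = length (filter (\<lambda>x. x = S) w)"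

definition nH :: "letter list \<Rightarrow> nat" where
  "nH w = length (filter (\<lambda>x. x = H) w)"

definition dyck :: "letter list \<Rightarrow> bool" where
  "dyck w \<longleftrightarrow> nS w = nH w \<and> (\<forall>k \<le> length w. nH (take k w) \<le> nS (take k w))"

definition semilen :: "letter list \<Rightarrow> nat" where
  "semilen w = length w div 2"

definition Pbar_weight :: "real \<Rightarrow> real \<Rightarrow> letter list \<Rightarrow> real" where
  "Pbar_weight p q w = p * (p * q) ^ semilen w"

definition Pbar :: "real \<Rightarrow> real \<Rightarrow> letter list set \<Rightarrow> real" where
  "Pbar p q A = infsum (Pbar_weight p q) (A \<inter> {w. dyck w})"

end

theory Submission
  imports Defs
begin

fun pth :: "nat \<Rightarrow> letter list \<Rightarrow> nat option" where
  "pth h [] = Some h"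
| "pth h (S # w) = pth (Suc h) w"
| "pth h (H # w) = (if h = 0 then None else pth (h - 1) w)"

lemma pth_append: "pth h (u @ v) = (case pth h u of None \<Rightarrow> None | Some j \<Rightarrow> pth j v)"
proof (induction u arbitrary: h)
  case Nil then show ?case by simp
next
  case (Cons a u) then show ?case by (cases a) auto
qed

lemma nS_Cons: "nS (a # w) = (if a = S then Suc (nS w) else nS w)"
  by (simp add: nS_def)
lemma nH_Cons: "nH (a # w) = (if a = H then Suc (nH w) else nH w)"
  by (simp add: nH_def)
lemma nS_Nil[simp]: "nS [] = 0" by (simp add: nS_def)
lemma nH_Nil[simp]: "nH [] = 0" by (simp add: nH_def)
lemma nS_append: "nS (u @ v) = nS u + nS v" by (simp add: nS_def)
lemma nH_append: "nH (u @ v) = nH u + nH v" by (simp add: nH_def)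

lemma len_nSH: "length w = nS w + nH w"
proof (induction w)
  case Nil then show ?case by simp
next
  case (Cons a w) then show ?case by (cases a) (auto simp: nS_Cons nH_Cons)
qed

lemma all_take_Cons:
  "(\<forall>i\<le>length (a # w). P (take i (a # w))) \<longleftrightarrow> P [] \<and> (\<forall>j\<le>length w. P (a # take j w))"
  (is "?L \<longleftrightarrow> ?R")
proof
  assume L: ?L
  have "P (take 0 (a # w))" using L by (intro L[rule_format]) simp
  moreover have "P (a # take j w)" if "j \<le> length w" for j
  proof -
    have "P (take (Suc j) (a # w))" using that by (intro L[rule_format]) simp
    then show ?thesis by simp
  qed
  ultimately show ?R by simp
next
  assume R: ?R
  show ?L
  proof (intro allI impI)
    fix i assume "i \<le> length (a # w)"
    then show "P (take i (a # w))" using R by (cases i) auto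
  qed
qed

lemma pth_char:
  "pth h w = Some k \<longleftrightarrow> (\<forall>i\<le>length w. nH (take i w) \<le> h + nS (take i w)) \<and> h + nS w = k + nH w"
proof (induction w arbitrary: h)
  case Nil then show ?case by auto
next
  case (Cons a w)
  show ?case
  proof (cases a)
    case S
    then show ?thesis using Cons[of "Suc h"]
      unfolding all_take_Cons[where P="\<lambda>t. nH t \<le> h + nS t"] by (auto simp: nS_Cons nH_Cons)
  next
    case H
    show ?thesis
    proof (cases h)
      case 0
      then show ?thesis using H
        unfolding all_take_Cons[where P="\<lambda>t. nH t \<le> h + nS t"] by (auto simp: nS_Cons nH_Cons)
    next
      case (Suc h')
      then show ?thesis using H Cons[of h']
        unfolding all_take_Cons[where P="\<lambda>t. nH t \<le> h + nS t"] by (auto simp: nS_Cons nH_Cons)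
    qed
  qed
qed

lemma dyck_pth: "dyck w \<longleftrightarrow> pth 0 w = Some 0"
  unfolding dyck_def pth_char by auto

lemma pth_count: "pth h w = Some k \<Longrightarrow> h + nS w = k + nH w"
  using pth_char by blast

lemma pth_shift: "pth h b = Some j \<Longrightarrow> pth (h + c) b = Some (j + c)"
proof (induction b arbitrary: h)
  case Nil then show ?case by simp
next
  case (Cons a b)
  show ?case
  proof (cases a)
    case S
    then show ?thesis using Cons.IH[of "Suc h"] Cons.prems by simp
  next
    case H
    then have "h > 0" "pth (h - 1) b = Some j" using Cons.prems by (auto split: if_splits)
    then show ?thesis using Cons.IH[of "h - 1"] H by simp
  qed
qed

lemma pth_concat:
  assumes "pth 0 a = Some m" "pth 0 b = Some j"
  shows "pth 0 (a @ [S] @ b) = Some (Suc m + j)"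
  using pth_shift[OF assms(2), of "Suc m"] assms(1) by (simp add: pth_append add.commute)

lemma pth_split:
  "pth 0 u = Some k \<Longrightarrow> m < k \<Longrightarrow> \<exists>a b. u = a @ [S] @ b \<and> pth 0 a = Some m \<and> pth 0 b = Some (k - m - 1)"
proof (induction u arbitrary: k rule: rev_induct)
  case Nil then show ?case by simp
next
  case (snoc l u)
  show ?case
  proof (cases "pth 0 u")
    case None
    then show ?thesis using snoc.prems by (simp add: pth_append)
  next
    case (Some i)
    show ?thesis
    proof (cases l)
      case S
      then have k: "k = Suc i" using snoc.prems Some by (simp add: pth_append)
      show ?thesis
      proof (cases "m < i")
        case True
        from snoc.IH[OF Some True] obtain a b where
          ab: "u = a @ [S] @ b" "pth 0 a = Some m" "pth 0 b = Some (i - m - 1)" by blast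
        have "pth 0 (b @ [S]) = Some (k - m - 1)" using ab(3) k True by (simp add: pth_append)
        then show ?thesis using ab S by (intro exI[of _ a] exI[of _ "b @ [S]"]) auto
      next
        case False
        then have "m = i" using k snoc.prems by simp
        then show ?thesis using S Some k by (intro exI[of _ u] exI[of _ "[]"]) auto
      qed
    next
      case H
      then have i: "i = Suc k" using snoc.prems Some by (auto simp: pth_append split: if_splits)
      then have "m < i" using snoc.prems by simp
      from snoc.IH[OF Some this] obtain a b where
        ab: "u = a @ [S] @ b" "pth 0 a = Some m" "pth 0 b = Some (i - m - 1)" by blast
      have "pth 0 (b @ [H]) = Some (k - m - 1)" using ab(3) i snoc.prems by (simp add: pth_append)
      then show ?thesis using ab H by (intro exI[of _ a] exI[of _ "b @ [H]"]) auto
    qed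
  qed
qed

lemma no_overlap:
  assumes "pth 0 a = Some m" "pth 0 (a @ S # c) = Some m"
  shows "pth 0 (c @ S # b) \<noteq> Some j"
proof
  assume as: "pth 0 (c @ S # b) = Some j"
  have c: "pth (Suc m) c = Some m" using assms by (simp add: pth_append)
  then obtain i where i: "pth 0 c = Some i" using as by (auto simp: pth_append split: option.splits)
  from pth_count[OF c] pth_count[OF i] show False by simp
qed

lemma split_inj:
  assumes "a @ [S] @ b = a' @ [S] @ b'" "pth 0 a = Some m" "pth 0 a' = Some m"
    "pth 0 b = Some j" "pth 0 b' = Some j"
  shows "a = a' \<and> b = b'"
proof -
  from assms(1) obtain us where
    "a = a' @ us \<and> us @ S # b = S # b' \<or> a @ us = a' \<and> S # b = us @ S # b'"
    using append_eq_append_conv2[of a "S # b" a' "S # b'"] by auto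
  then show ?thesis
  proof
    assume h: "a = a' @ us \<and> us @ S # b = S # b'"
    show ?thesis
    proof (cases us)
      case Nil then show ?thesis using h by simp
    next
      case (Cons z c)
      then have "z = S" "a = a' @ S # c" "b' = c @ S # b" using h by auto
      then show ?thesis using no_overlap[of a' m c b j] assms by simp
    qed
  next
    assume h: "a @ us = a' \<and> S # b = us @ S # b'"
    show ?thesis
    proof (cases us)
      case Nil then show ?thesis using h by simp
    next
      case (Cons z c)
      then have "z = S" "a' = a @ S # c" "b = c @ S # b'" using h by auto
      then show ?thesis using no_overlap[of a m c b' j] assms by simp
    qed
  qed
qed


lemma has_sum_prod_nonneg:
  fixes f g :: "'a \<Rightarrow> real"
  assumes f0: "\<And>x. x \<in> A \<Longrightarrow> f x \<ge> 0" and g0: "\<And>y. y \<in> B \<Longrightarrow> g y \<ge> 0"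
    and fa: "(f has_sum a) A" and gb: "(g has_sum b) B"
  shows "((\<lambda>(x, y). f x * g y) has_sum (a * b)) (A \<times> B)"
proof (rule has_sum_SigmaI)
  show "((\<lambda>y. case (x, y) of (x, y) \<Rightarrow> f x * g y) has_sum f x * b) B" for x
    using has_sum_cmult_right[OF gb, of "f x"] by simp
  show "((\<lambda>x. f x * b) has_sum a * b) A"
    using has_sum_cmult_left[OF fa, of b] by simp
  have bf: "sum f F \<le> a" if "finite F" "F \<subseteq> A" for F
    using finite_sum_le_has_sum[OF fa that] f0 by auto
  have bg: "sum g F \<le> b" if "finite F" "F \<subseteq> B" for F
    using finite_sum_le_has_sum[OF gb that] g0 by auto
  show "(\<lambda>(x, y). f x * g y) summable_on A \<times> B"
  proof (rule nonneg_bdd_above_summable_on)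
    show "\<And>x. x \<in> A \<times> B \<Longrightarrow> 0 \<le> (case x of (x, y) \<Rightarrow> f x * g y)"
      using f0 g0 by auto
    show "bdd_above (sum (\<lambda>(x, y). f x * g y) ` {F. F \<subseteq> A \<times> B \<and> finite F})"
    proof (rule bdd_aboveI2)
      fix F assume F: "F \<in> {F. F \<subseteq> A \<times> B \<and> finite F}"
      let ?F1 = "fst ` F" and ?F2 = "snd ` F"
      have fin: "finite ?F1" "finite ?F2" using F by auto
      have sub: "?F1 \<subseteq> A" "?F2 \<subseteq> B" using F by force+
      have "sum (\<lambda>(x, y). f x * g y) F \<le> sum (\<lambda>(x, y). f x * g y) (?F1 \<times> ?F2)"
        apply (rule sum_mono2)
        using fin sub f0 g0 F by (auto simp: subset_iff image_iff intro!: mult_nonneg_nonneg) force+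
      also have "\<dots> = sum f ?F1 * sum g ?F2"
        by (simp add: sum_product sum.cartesian_product)
      also have "\<dots> \<le> a * b"
        using bf[OF fin(1) sub(1)] bg[OF fin(2) sub(2)] f0 g0 sub bf[of "{}"]
        by (intro mult_mono) (auto intro!: sum_nonneg)
      finally show "sum (\<lambda>(x, y). f x * g y) F \<le> a * b" .
    qed
  qed
qed


definition Dy :: "letter list set" where "Dy = {w. pth 0 w = Some 0}"
definition phi :: "letter list \<times> letter list \<Rightarrow> letter list" where
  "phi = (\<lambda>(a, b). a @ [S] @ b @ [H])"

lemma dyck_decomp:
  assumes "pth 0 w = Some 0" "w \<noteq> []"
  shows "\<exists>a b. w = a @ [S] @ b @ [H] \<and> pth 0 a = Some 0 \<and> pth 0 b = Some 0"
proof -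
  obtain w' l where w: "w = w' @ [l]" using assms(2) rev_exhaust by blast
  obtain i where i: "pth 0 w' = Some i"
    using assms(1) w by (auto simp: pth_append split: option.splits)
  have l: "l = H" "i = 1"
    using assms(1) w i by (cases l; auto simp: pth_append split: if_splits)+
  from pth_split[of w' 1 0] i l obtain a b where
    "w' = a @ [S] @ b" "pth 0 a = Some 0" "pth 0 b = Some 0" by auto
  then show ?thesis using w l by auto
qed

lemma Dy_eq: "Dy = insert [] (phi ` (Dy \<times> Dy))"
proof
  show "Dy \<subseteq> insert [] (phi ` (Dy \<times> Dy))"
  proof
    fix w assume "w \<in> Dy"
    then show "w \<in> insert [] (phi ` (Dy \<times> Dy))"
      using dyck_decomp[of w] unfolding Dy_def phi_def by (cases "w = []") force+
  qed
  show "insert [] (phi ` (Dy \<times> Dy)) \<subseteq> Dy"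
  proof
    fix w assume "w \<in> insert [] (phi ` (Dy \<times> Dy))"
    then consider "w = []" | a b where "w = a @ [S] @ b @ [H]" "a \<in> Dy" "b \<in> Dy"
      unfolding phi_def by auto
    then show "w \<in> Dy"
    proof cases
      case 1 then show ?thesis by (simp add: Dy_def)
    next
      case 2
      then have "pth 0 (a @ [S] @ b) = Some 1" using pth_concat[of a 0 b 0] by (simp add: Dy_def)
      then show ?thesis using 2 by (simp add: Dy_def pth_append)
    qed
  qed
qed

lemma phi_inj: "inj_on phi (Dy \<times> Dy)"
proof (rule inj_onI)
  fix x y assume "x \<in> Dy \<times> Dy" "y \<in> Dy \<times> Dy" "phi x = phi y"
  then obtain a b a' b' where "x = (a, b)" "y = (a', b')" "a @ [S] @ b = a' @ [S] @ b'"
    "pth 0 a = Some 0" "pth 0 a' = Some 0" "pth 0 b = Some 0" "pth 0 b' = Some 0"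
    unfolding phi_def Dy_def by (cases x; cases y) auto
  then show "x = y" using split_inj[of a b a' b' 0 0] by simp
qed

lemma phi_nonempty: "phi z \<noteq> []" by (cases z) (simp add: phi_def)
lemma phi_nonempty2: "[] \<noteq> phi z" by (cases z) (simp add: phi_def)

lemma nH_phi: "nH (phi (a, b)) = Suc (nH a + nH b)"
  by (simp add: phi_def nH_append nH_Cons)

lemma finite_letter_UNIV: "finite (UNIV :: letter set)"
proof -
  have "(UNIV :: letter set) = {S, H}" using letter.exhaust by auto
  then show ?thesis by (rule ssubst) simp
qed

definition DyN :: "nat \<Rightarrow> letter list set" where "DyN N = {w \<in> Dy. length w \<le> N}"

lemma finite_DyN: "finite (DyN N)"
proof -
  have "DyN N \<subseteq> {xs. set xs \<subseteq> UNIV \<and> length xs \<le> N}" by (auto simp: DyN_def)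
  then show ?thesis using finite_lists_length_le[OF finite_letter_UNIV, of N] finite_subset by blast
qed

lemma DyN_bound:
  fixes p q :: real
  assumes "0 < q" "q < p" "p + q = 1"
  shows "(\<Sum>w\<in>DyN N. (p * q) ^ nH w) \<le> 1 / p"
proof (induction N)
  case 0
  have "DyN 0 = {[]}" by (auto simp: DyN_def Dy_def)
  then show ?case using assms by simp
next
  case (Suc N)
  let ?g = "\<lambda>w. (p * q) ^ nH w"
  let ?s = "sum ?g (DyN N)"
  have sub: "DyN (Suc N) \<subseteq> insert [] (phi ` (DyN N \<times> DyN N))"
  proof
    fix w assume w: "w \<in> DyN (Suc N)"
    then have "w \<in> insert [] (phi ` (Dy \<times> Dy))" using Dy_eq by (auto simp: DyN_def)
    then show "w \<in> insert [] (phi ` (DyN N \<times> DyN N))"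
      using w by (auto simp: DyN_def phi_def)
  qed
  have inj: "inj_on phi (DyN N \<times> DyN N)"
    using phi_inj by (rule inj_on_subset) (auto simp: DyN_def)
  have fin: "finite (insert [] (phi ` (DyN N \<times> DyN N)))" using finite_DyN by simp
  have "sum ?g (DyN (Suc N)) \<le> sum ?g (insert [] (phi ` (DyN N \<times> DyN N)))"
    by (rule sum_mono2[OF fin sub]) (use assms in auto)
  also have "\<dots> = 1 + sum ?g (phi ` (DyN N \<times> DyN N))"
    using phi_nonempty phi_nonempty2 by (subst sum.insert) (auto simp: finite_DyN)
  also have "sum ?g (phi ` (DyN N \<times> DyN N)) = sum (?g \<circ> phi) (DyN N \<times> DyN N)"
    by (rule sum.reindex[OF inj])
  also have "\<dots> = sum (\<lambda>(a, b). (p * q) * (?g a * ?g b)) (DyN N \<times> DyN N)"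
    by (rule sum.cong) (auto simp: nH_phi power_add)
  also have "\<dots> = (\<Sum>a\<in>DyN N. \<Sum>b\<in>DyN N. (p * q) * (?g a * ?g b))"
    by (rule sum.cartesian_product[symmetric])
  also have "\<dots> = (p * q) * (?s * ?s)"
    by (subst sum_product) (simp add: sum_distrib_left)
  finally have le: "sum ?g (DyN (Suc N)) \<le> 1 + (p * q) * (?s * ?s)" .
  have s0: "0 \<le> ?s" using assms by (auto intro!: sum_nonneg)
  have "?s * ?s \<le> (1/p) * (1/p)" using Suc s0 assms by (intro mult_mono) auto
  then have "(p * q) * (?s * ?s) \<le> (p * q) * ((1/p) * (1/p))"
    using assms by (intro mult_left_mono) auto
  also have "\<dots> = q / p" using assms by (simp add: field_simps power2_eq_square)
  finally have "sum ?g (DyN (Suc N)) \<le> 1 + q / p" using le by linarith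
  also have "1 + q / p = 1 / p" using assms by (simp add: field_simps)
  finally show ?case .
qed

lemma T_value:
  fixes p q :: real
  assumes "0 < q" "q < p" "p + q = 1"
  shows "((\<lambda>w. (p * q) ^ nH w) has_sum (1 / p)) Dy"
proof -
  let ?g = "\<lambda>w. (p * q) ^ nH w"
  have g0: "\<And>w. 0 \<le> ?g w" using assms by simp
  have bnd: "sum ?g F \<le> 1 / p" if "finite F" "F \<subseteq> Dy" for F
  proof -
    let ?N = "Max (insert 0 (length ` F))"
    have "F \<subseteq> DyN ?N" using that by (auto simp: DyN_def)
    then have "sum ?g F \<le> sum ?g (DyN ?N)"
      by (intro sum_mono2[OF finite_DyN]) (use g0 in auto)
    also have "\<dots> \<le> 1 / p" by (rule DyN_bound[OF assms])
    finally show ?thesis .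
  qed
  have summ: "?g summable_on Dy"
    by (rule nonneg_bdd_above_summable_on) (use g0 bnd in \<open>auto intro!: bdd_aboveI2\<close>)
  define t where "t = infsum ?g Dy"
  have ht: "(?g has_sum t) Dy" using summ t_def by (simp add: has_sum_infsum)
  have tle: "t \<le> 1 / p" using has_sum_le_finite_sums[OF ht bnd] by simp
  have t0: "0 \<le> t" using has_sum_nonneg[OF ht] g0 by simp
  have "((\<lambda>(a, b). ?g a * ?g b) has_sum (t * t)) (Dy \<times> Dy)"
    by (rule has_sum_prod_nonneg[OF _ _ ht ht]) (use g0 in auto)
  then have "((\<lambda>z. (p * q) * (case z of (a, b) \<Rightarrow> ?g a * ?g b)) has_sum ((p * q) * (t * t))) (Dy \<times> Dy)"
    by (rule has_sum_cmult_right)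
  then have "((?g \<circ> phi) has_sum ((p * q) * (t * t))) (Dy \<times> Dy)"
    by (rule has_sum_cong[THEN iffD1, rotated]) (auto simp: nH_phi power_add)
  then have "(?g has_sum ((p * q) * (t * t))) (phi ` (Dy \<times> Dy))"
    using has_sum_reindex[OF phi_inj] by blast
  then have "(?g has_sum (?g [] + (p * q) * (t * t))) (insert [] (phi ` (Dy \<times> Dy)))"
    by (rule has_sum_insert[rotated]) (use phi_nonempty phi_nonempty2 in \<open>auto simp: image_iff\<close>)
  then have "(?g has_sum (1 + (p * q) * (t * t))) Dy" using Dy_eq by simp
  then have eq: "t = 1 + (p * q) * (t * t)" using ht has_sum_unique by blast
  have "(p * t - 1) * (q * t - 1) = 0"
  proof -
    have "(p * t - 1) * (q * t - 1) = p * q * t * t - (p + q) * t + 1" by algebra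
    also have "\<dots> = 0" using eq assms by (simp add: algebra_simps)
    finally show ?thesis .
  qed
  moreover have "q * t - 1 \<noteq> 0"
  proof
    assume "q * t - 1 = 0"
    then have "t = 1 / q" using assms by (simp add: field_simps)
    moreover have "1 / p < 1 / q" using assms by (simp add: frac_less2)
    ultimately show False using tle by simp
  qed
  ultimately have "p * t - 1 = 0" by simp
  then have "t = 1 / p" using assms by (simp add: field_simps)
  then show ?thesis using ht by simp
qed


definition Q :: "nat \<Rightarrow> letter list set" where "Q m = {w. pth 0 w = Some m}"
definition psi :: "letter list \<times> letter list \<Rightarrow> letter list" where
  "psi = (\<lambda>(a, b). a @ [S] @ b)"

lemma Q_Suc: "Q (Suc m) = psi ` (Q m \<times> Dy)"
proof
  show "Q (Suc m) \<subseteq> psi ` (Q m \<times> Dy)"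
  proof
    fix w assume "w \<in> Q (Suc m)"
    then obtain a b where "w = a @ [S] @ b" "pth 0 a = Some m" "pth 0 b = Some 0"
      using pth_split[of w "Suc m" m] by (auto simp: Q_def)
    then show "w \<in> psi ` (Q m \<times> Dy)" unfolding psi_def Q_def Dy_def by force
  qed
  show "psi ` (Q m \<times> Dy) \<subseteq> Q (Suc m)"
    using pth_concat[of _ m _ 0] by (auto simp: psi_def Q_def Dy_def)
qed

lemma psi_inj: "inj_on psi (Q m \<times> Dy)"
proof (rule inj_onI)
  fix x y assume "x \<in> Q m \<times> Dy" "y \<in> Q m \<times> Dy" "psi x = psi y"
  then obtain a b a' b' where "x = (a, b)" "y = (a', b')" "a @ [S] @ b = a' @ [S] @ b'"
    "pth 0 a = Some m" "pth 0 a' = Some m" "pth 0 b = Some 0" "pth 0 b' = Some 0"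
    unfolding psi_def Dy_def Q_def by (cases x; cases y) auto
  then show "x = y" using split_inj[of a b a' b' m 0] by simp
qed

lemma Q_value:
  fixes p q :: real
  assumes "0 < q" "q < p" "p + q = 1"
  shows "((\<lambda>w. (p * q) ^ nH w) has_sum ((1 / p) ^ Suc m)) (Q m)"
proof (induction m)
  case 0
  have "Q 0 = Dy" by (simp add: Q_def Dy_def)
  then show ?case using T_value[OF assms] by simp
next
  case (Suc m)
  let ?g = "\<lambda>w. (p * q) ^ nH w"
  have g0: "\<And>w. 0 \<le> ?g w" using assms by simp
  have "((\<lambda>(a, b). ?g a * ?g b) has_sum ((1 / p) ^ Suc m * (1 / p))) (Q m \<times> Dy)"
    by (rule has_sum_prod_nonneg[OF _ _ Suc T_value[OF assms]]) (use g0 in auto)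
  moreover have "?g \<circ> psi = (\<lambda>(a, b). ?g a * ?g b)"
    by (auto simp: fun_eq_iff psi_def nH_append nH_Cons power_add)
  ultimately have "((?g \<circ> psi) has_sum ((1 / p) ^ Suc (Suc m))) (Q m \<times> Dy)"
    by (simp add: mult.commute)
  then show ?case using has_sum_reindex[OF psi_inj] Q_Suc by metis
qed

lemma pth_repH: "pth j (replicate n H) = (if n \<le> j then Some (j - n) else None)"
  by (induction n arbitrary: j) (auto simp: diff_Suc split: nat.splits)

lemma semilen_nH: "pth 0 w = Some 0 \<Longrightarrow> semilen w = nH w"
  using pth_count[of 0 w 0] len_nSH[of w] by (simp add: semilen_def)

theorem lemma9:
  fixes p q :: real and n :: nat
  assumes "0 < q" and "q < p" and "p + q = 1" and "n \<ge> 1"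
  shows "(Pbar_weight p q has_sum (p * q ^ n))
           {w. dyck w \<and> (\<exists>u. w = u @ [S] @ replicate n H)}"
proof -
  define chi where "chi = (\<lambda>u. u @ [S] @ replicate n H)"
  have pchi: "pth 0 (chi u) = Some 0 \<longleftrightarrow> pth 0 u = Some (n - 1)" for u
    using assms(4)
    by (auto simp: chi_def pth_append pth_repH split: option.splits)
  have set_eq: "{w. dyck w \<and> (\<exists>u. w = u @ [S] @ replicate n H)} = chi ` Q (n - 1)"
    using pchi by (auto simp: dyck_pth Q_def chi_def)
  have inj: "inj_on chi (Q (n - 1))" by (rule inj_onI) (simp add: chi_def)
  have nHchi: "nH (chi u) = nH u + n" for u
    by (simp add: chi_def nH_append nH_Cons nH_def)
  have "((\<lambda>u. (p * (p * q) ^ n) * (p * q) ^ nH u) has_sum ((p * (p * q) ^ n) * (1 / p) ^ Suc (n - 1))) (Q (n - 1))"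
    by (rule has_sum_cmult_right[OF Q_value[OF assms(1-3)]])
  moreover have "(p * (p * q) ^ n) * (1 / p) ^ Suc (n - 1) = p * q ^ n"
    using assms by (simp add: power_mult_distrib power_divide field_simps)
  ultimately have h1: "((\<lambda>u. (p * (p * q) ^ n) * (p * q) ^ nH u) has_sum (p * q ^ n)) (Q (n - 1))"
    by simp
  have "((Pbar_weight p q \<circ> chi) has_sum (p * q ^ n)) (Q (n - 1))"
  proof (rule has_sum_cong[THEN iffD1, OF _ h1])
    fix u assume "u \<in> Q (n - 1)"
    then have "pth 0 (chi u) = Some 0" using pchi by (simp add: Q_def)
    then show "p * (p * q) ^ n * (p * q) ^ nH u = (Pbar_weight p q \<circ> chi) u"
      by (simp add: Pbar_weight_def semilen_nH nHchi power_add)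
  qed
  then show ?thesis using has_sum_reindex[OF inj] set_eq by metis
qed

end
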